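(* Let $\mathcal K$ be a tame topological Kuranishi atlas and let $(I,x),(J,y)$ with $x\in U_I$, $y\in U_J$. The following are equivalent: (1) $(I,x)\sim(J,y)$ in the equivalence relation defining $|\mathcal K|$; (2) $I\cup J\in\mathcal I_{\mathcal K}$, $x\in U_{I(I\cup J)}$, $y\in U_{J(I\cup J)}$ and $\phi_{I(I\cup J)}(x)=\phi_{J(I\cup J)}(y)$; (3) either $I\cap J\neq\emptyset$ and there is $w\in U_{(I\cap J)I}\cap U_{(I\cap J)J}$ with $\phi_{(I\cap J)I}(w)=x$ and $\phi_{(I\cap J)J}(w)=y$, or $I\cap J=\emptyset$, $\mathfrak s_I(x)=0_I(x)$, $\mathfrak s_J(y)=0_J(y)$ and $\psi_I(x)=\psi_J(y)$. The analogous equivalences hold for $(I,e),(J,f)$ with $e\in\mathbb E_I$, $f\in\mathbb E_J$ and the relation defining $|\mathbf E_{\mathcal K}|$, with $\phi$ replaced by $\widehat\Phi$ and domains $U_{\bullet\bullet}$ replaced by $\mathrm{pr}_\bullet^{-1}(U_{\bullet\bullet})$, where in the case $I\cap J=\emptyset$ the condition is that $e=\mathfrak s_I(x)=0_I(x)$ and $f=\mathfrak s_J(y)=0_J(y)$ for some $x\in U_I$, $y\in U_J$ with $\psi_I(x)=\psi_J(y)$. Moreover, for each $I\in\mathcal I_{\mathcal K}$ the maps $\pi_{\mathcal K}|_{U_I}:U_I\to|\mathcal K|$ and $\pi_{\mathbf E_{\mathcal K}}|_{\mathbb E_I}:\mathbb E_I\to|\mathbf E_{\mathcal K}|$ are 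injective.
   Context: $X$ is a compact metrizable space. Charts: a topological Kuranishi chart for $X$ with open footprint $F\subset X$ is a tuple $\mathbf K=(U,\mathbb E,\mathfrak s,\psi)$ where $U$ is a separable, locally compact, metrizable space; $\mathbb E$ is a separable, locally compact, metrizable space with continuous maps $\mathrm{pr}:\mathbb E\to U$ and $0:U\to\mathbb E$ with $\mathrm{pr}\circ0=\mathrm{id}_U$; $\mathfrak s:U\to\mathbb E$ is continuous with $\mathrm{pr}\circ\mathfrak s=\mathrm{id}_U$; and $\psi$ is a homeomorphism from $\mathfrak s^{-1}(0):=\{x\in U:\mathfrak s(x)=0(x)\}$ onto $F$. Coordinate changes: for charts $\mathbf K_I,\mathbf K_J$ with $F_I\cap F_J\neq\emptyset$, a coordinate change $\widehat\Phi_{IJ}:\mathbf K_I\to\mathbf K_J$ consists of an open set $U_{IJ}\subset U_I$ with $U_{IJ}\cap\mathfrak s_I^{-1}(0_I)=\psi_I^{-1}(F_I\cap F_J)$ and a topological embedding $\widehat\Phi_{IJ}:\mathrm{pr}_I^{-1}(U_{IJ})\to\mathbb E_J$ such that there is a topological embedding $\phi_{IJ}:U_{IJ}\to U_J$ with $\mathrm{pr}_J\circ\widehat\Phi_{IJ}=\phi_{IJ}\circ\mathrm{pr}_I$, $0_J\circ\phi_{IJ}=\widehat\Phi_{IJ}\circ0_I$ and $\mathfrak s_J\circ\phi_{IJ}=\widehat\Phi_{IJ}\circ\mathfrak s_I$ on $U_{IJ}$, and $\phi_{IJ}=\psi_J^{-1}\circ\psi_I$ on $U_{IJ}\cap\mathfrak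 s_I^{-1}(0_I)$. Atlases: a covering family of basic charts is a finite family $(\mathbf K_i)_{i=1,\dots,N}$ of charts whose footprints cover $X$; $\mathcal I_{\mathcal K}$ is the set of nonempty $I\subset\{1,\dots,N\}$ with $F_I:=\bigcap_{i\in I}F_i\neq\emptyset$. Transition data consist of a chart $\mathbf K_J$ with footprint $F_J$ for each $J\in\mathcal I_{\mathcal K}$ with $|J|\ge2$ (and $\mathbf K_{\{i\}}:=\mathbf K_i$), and a coordinate change $\widehat\Phi_{IJ}:\mathbf K_I\to\mathbf K_J$ for all $I\subsetneq J$ in $\mathcal I_{\mathcal K}$. We set $U_{II}:=U_I$, $\phi_{II}:=\mathrm{id}_{U_I}$, $\widehat\Phi_{II}:=\mathrm{id}_{\mathbb E_I}$. For $I\subsetneq J\subsetneq K$ let $U_{IJK}:=U_{IJ}\cap\phi_{IJ}^{-1}(U_{JK})$. The triple satisfies the weak cocycle condition if $\widehat\Phi_{JK}\circ\widehat\Phi_{IJ}=\widehat\Phi_{IK}$ on $\mathrm{pr}_I^{-1}(U_{IJK}\cap U_{IK})$; the cocycle condition if in addition $U_{IJK}\subset U_{IK}$; the strong cocycle condition if in addition $U_{IJK}=U_{IK}$. A weak topological Kuranishi atlas $\mathcal K$ is a covering family with transition data satisfying the weak cocycle condition for all such triples; a topological Kuranishi atlas is one satisfying the cocycle condition for all triples. Filtrations: a weak topological Kuranishi atlas is filtered if it is equipped with closed subsets $\mathbb E_{IJ}\subset\mathbb E_J$ for all $J\in\mathcal I_{\mathcal K}$ and $I\subset J$ (including $I=\emptyset$)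 such that (i) $\mathbb E_{JJ}=\mathbb E_J$ and $\mathbb E_{\emptyset J}=\mathrm{im}\,0_J$; (ii) $\widehat\Phi_{JK}(\mathrm{pr}_J^{-1}(U_{JK})\cap\mathbb E_{IJ})=\mathbb E_{IK}\cap\mathrm{pr}_K^{-1}(\mathrm{im}\,\phi_{JK})$ for $I\subset J\subsetneq K$; (iii) $\mathbb E_{IJ}\cap\mathbb E_{HJ}=\mathbb E_{(I\cap H)J}$ for $I,H\subset J$; (iv) $\mathrm{im}\,\phi_{IJ}$ is an open subset of $\mathfrak s_J^{-1}(\mathbb E_{IJ})$ for $I\subsetneq J$. Tameness: a filtered weak topological Kuranishi atlas is tame if $U_{IJ}\cap U_{IK}=U_{I(J\cup K)}$ for all $I,J,K\in\mathcal I_{\mathcal K}$ with $I\subset J,K$ (where $U_{IL}:=\emptyset$ if $L\notin\mathcal I_{\mathcal K}$), and $\phi_{IJ}(U_{IK})=U_{JK}\cap\mathfrak s_J^{-1}(\mathbb E_{IJ})$ for all $I\subset J\subset K$ in $\mathcal I_{\mathcal K}$ (equalities of indices allowed). Virtual neighbourhood: for a topological Kuranishi atlas, $|\mathcal K|$ is the quotient of $\bigsqcup_{I\in\mathcal I_{\mathcal K}}U_I=\{(I,x):x\in U_I\}$ by the equivalence relation generated by $(I,x)\sim(J,\phi_{IJ}(x))$ for $I\subset J$, $x\in U_{IJ}$, with the quotient topology and projection $\pi_{\mathcal K}$; similarly $|\mathbf E_{\mathcal K}|$ is the quotient of $\bigsqcup_I\mathbb E_I$ by the relation generated by $(I,e)\sim(J,\widehat\Phi_{IJ}(e))$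 for $e\in\mathrm{pr}_I^{-1}(U_{IJ})$, with projection $\pi_{\mathbf E_{\mathcal K}}$. *)

theory Defs
  imports "HOL-Analysis.Analysis"
begin

text \<open>All domains U_I live in one ambient type 'u and
all bundles E_I in one ambient type 'e; each chart carries its own topology, whose
carrier (topspace) is the actual space.\<close>

record ('x, 'u, 'e) katlas =
  nch  :: nat
  Fb   :: "nat \<Rightarrow> 'x set"
  Ut   :: "nat set \<Rightarrow> 'u topology"
  Et   :: "nat set \<Rightarrow> 'e topology"
  pr   :: "nat set \<Rightarrow> 'e \<Rightarrow> 'u"
  zr   :: "nat set \<Rightarrow> 'u \<Rightarrow> 'e"
  sc   :: "nat set \<Rightarrow> 'u \<Rightarrow> 'e"
  psi  :: "nat set \<Rightarrow> 'u \<Rightarrow> 'x"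
  UU   :: "nat set \<Rightarrow> nat set \<Rightarrow> 'u set"    \<comment> \<open>U_IJ for I strictly contained in J\<close>
  phi  :: "nat set \<Rightarrow> nat set \<Rightarrow> 'u \<Rightarrow> 'u"
  Phi  :: "nat set \<Rightarrow> nat set \<Rightarrow> 'e \<Rightarrow> 'e"
  EE   :: "nat set \<Rightarrow> nat set \<Rightarrow> 'e set"    \<comment> \<open>filtration E_IJ, a subset of E_J\<close>

definition zeroset :: "'u topology \<Rightarrow> ('u \<Rightarrow> 'e) \<Rightarrow> ('u \<Rightarrow> 'e) \<Rightarrow> 'u set" where
  "zeroset U z s = {x \<in> topspace U. s x = z x}"

definition is_kchart ::
  "'x topology \<Rightarrow> 'u topology \<Rightarrow> 'e topology \<Rightarrow> ('e \<Rightarrow> 'u) \<Rightarrow> ('u \<Rightarrow> 'e) \<Rightarrow> ('u \<Rightarrow> 'e)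
    \<Rightarrow> ('u \<Rightarrow> 'x) \<Rightarrow> 'x set \<Rightarrow> bool" where
  "is_kchart X U E p z s ps F \<longleftrightarrow>
     openin X F \<and>
     separable_space U \<and> locally_compact_space U \<and> metrizable_space U \<and>
     separable_space E \<and> locally_compact_space E \<and> metrizable_space E \<and>
     continuous_map E U p \<and> continuous_map U E z \<and> (\<forall>x\<in>topspace U. p (z x) = x) \<and>
     continuous_map U E s \<and> (\<forall>x\<in>topspace U. p (s x) = x) \<and>
     homeomorphic_map (subtopology U (zeroset U z s)) (subtopology X F) ps"

definition footprint :: "('x, 'u, 'e, 'z) katlas_scheme \<Rightarrow> nat set \<Rightarrow> 'x set" where
  "footprint K I = (\<Inter>i\<in>I. Fb K i)"

definition IK :: "('x, 'u, 'e, 'z) katlas_scheme \<Rightarrow> nat set set" where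
  "IK K = {I. I \<noteq> {} \<and> I \<subseteq> {1..nch K} \<and> footprint K I \<noteq> {}}"

definition prpre :: "('x, 'u, 'e, 'z) katlas_scheme \<Rightarrow> nat set \<Rightarrow> 'u set \<Rightarrow> 'e set" where
  "prpre K I A = {e \<in> topspace (Et K I). pr K I e \<in> A}"

definition chart_zeros :: "('x, 'u, 'e, 'z) katlas_scheme \<Rightarrow> nat set \<Rightarrow> 'u set" where
  "chart_zeros K I = zeroset (Ut K I) (zr K I) (sc K I)"

text \<open>Conventions: U_II = U_I, phi_II = id, Phi_II = id, and U_IL = {} if L is not in IK.\<close>
definition Uij :: "('x, 'u, 'e, 'z) katlas_scheme \<Rightarrow> nat set \<Rightarrow> nat set \<Rightarrow> 'u set" where
  "Uij K I J = (if J \<notin> IK K then {} else if I = J then topspace (Ut K I) else UU K I J)"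

definition phij :: "('x, 'u, 'e, 'z) katlas_scheme \<Rightarrow> nat set \<Rightarrow> nat set \<Rightarrow> 'u \<Rightarrow> 'u" where
  "phij K I J = (if I = J then id else phi K I J)"

definition Phij :: "('x, 'u, 'e, 'z) katlas_scheme \<Rightarrow> nat set \<Rightarrow> nat set \<Rightarrow> 'e \<Rightarrow> 'e" where
  "Phij K I J = (if I = J then id else Phi K I J)"

definition is_coord_change :: "'x topology \<Rightarrow> ('x, 'u, 'e, 'z) katlas_scheme \<Rightarrow> nat set \<Rightarrow> nat set \<Rightarrow> bool" where
  "is_coord_change X K I J \<longleftrightarrow>
     openin (Ut K I) (UU K I J) \<and>
     UU K I J \<inter> chart_zeros K I = {x \<in> chart_zeros K I. psi K I x \<in> footprint K I \<inter> footprint K J} \<and>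
     embedding_map (subtopology (Et K I) (prpre K I (UU K I J))) (Et K J) (Phi K I J) \<and>
     embedding_map (subtopology (Ut K I) (UU K I J)) (Ut K J) (phi K I J) \<and>
     (\<forall>e\<in>prpre K I (UU K I J). pr K J (Phi K I J e) = phi K I J (pr K I e)) \<and>
     (\<forall>x\<in>UU K I J. zr K J (phi K I J x) = Phi K I J (zr K I x)) \<and>
     (\<forall>x\<in>UU K I J. sc K J (phi K I J x) = Phi K I J (sc K I x)) \<and>
     (\<forall>x\<in>UU K I J \<inter> chart_zeros K I.
        phi K I J x = inv_into (chart_zeros K J) (psi K J) (psi K I x))"

definition is_top_katlas :: "'x topology \<Rightarrow> ('x, 'u, 'e, 'z) katlas_scheme \<Rightarrow> bool" where
  "is_top_katlas X K \<longleftrightarrow>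
     (\<forall>i\<in>{1..nch K}. is_kchart X (Ut K {i}) (Et K {i}) (pr K {i}) (zr K {i}) (sc K {i})
                         (psi K {i}) (Fb K i)) \<and>
     (\<Union>i\<in>{1..nch K}. Fb K i) = topspace X \<and>
     (\<forall>J\<in>IK K. is_kchart X (Ut K J) (Et K J) (pr K J) (zr K J) (sc K J) (psi K J) (footprint K J)) \<and>
     (\<forall>I\<in>IK K. \<forall>J\<in>IK K. I \<subset> J \<longrightarrow> is_coord_change X K I J) \<and>
     (\<forall>I\<in>IK K. \<forall>J\<in>IK K. \<forall>L\<in>IK K. I \<subset> J \<and> J \<subset> L \<longrightarrow>
        (\<forall>e\<in>prpre K I ((UU K I J \<inter> phi K I J -` UU K J L) \<inter> UU K I L).
            Phi K J L (Phi K I J e) = Phi K I L e) \<and>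
        UU K I J \<inter> phi K I J -` UU K J L \<subseteq> UU K I L)"

definition is_filtered :: "('x, 'u, 'e, 'z) katlas_scheme \<Rightarrow> bool" where
  "is_filtered K \<longleftrightarrow>
     (\<forall>J\<in>IK K. \<forall>I. I \<subseteq> J \<longrightarrow> closedin (Et K J) (EE K I J)) \<and>
     (\<forall>J\<in>IK K. EE K J J = topspace (Et K J) \<and> EE K {} J = zr K J ` topspace (Ut K J)) \<and>
     (\<forall>J\<in>IK K. \<forall>L\<in>IK K. \<forall>I. I \<subseteq> J \<and> J \<subset> L \<longrightarrow>
        Phi K J L ` (prpre K J (UU K J L) \<inter> EE K I J)
          = EE K I L \<inter> prpre K L (phi K J L ` UU K J L)) \<and>
     (\<forall>J\<in>IK K. \<forall>I H. I \<subseteq> J \<and> H \<subseteq> J \<longrightarrow> EE K I J \<inter> EE K H J = EE K (I \<inter> H) J) \<and>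
     (\<forall>I\<in>IK K. \<forall>J\<in>IK K. I \<subset> J \<longrightarrow>
        openin (subtopology (Ut K J) {x \<in> topspace (Ut K J). sc K J x \<in> EE K I J})
               (phi K I J ` UU K I J))"

definition is_tame :: "('x, 'u, 'e, 'z) katlas_scheme \<Rightarrow> bool" where
  "is_tame K \<longleftrightarrow>
     (\<forall>I\<in>IK K. \<forall>J\<in>IK K. \<forall>L\<in>IK K. I \<subseteq> J \<and> I \<subseteq> L \<longrightarrow>
        Uij K I J \<inter> Uij K I L = Uij K I (J \<union> L)) \<and>
     (\<forall>I\<in>IK K. \<forall>J\<in>IK K. \<forall>L\<in>IK K. I \<subseteq> J \<and> J \<subseteq> L \<longrightarrow>
        phij K I J ` Uij K I L = Uij K J L \<inter> {x \<in> topspace (Ut K J). sc K J x \<in> EE K I J})"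

definition domU :: "('x, 'u, 'e, 'z) katlas_scheme \<Rightarrow> (nat set \<times> 'u) set" where
  "domU K = {(I, x). I \<in> IK K \<and> x \<in> topspace (Ut K I)}"

definition domE :: "('x, 'u, 'e, 'z) katlas_scheme \<Rightarrow> (nat set \<times> 'e) set" where
  "domE K = {(I, e). I \<in> IK K \<and> e \<in> topspace (Et K I)}"

definition baseU :: "('x, 'u, 'e, 'z) katlas_scheme \<Rightarrow> nat set \<times> 'u \<Rightarrow> nat set \<times> 'u \<Rightarrow> bool" where
  "baseU K a b \<longleftrightarrow> (\<exists>I J x. I \<in> IK K \<and> J \<in> IK K \<and> I \<subseteq> J \<and> x \<in> Uij K I J \<and>
                      a = (I, x) \<and> b = (J, phij K I J x))"

definition baseE :: "('x, 'u, 'e, 'z) katlas_scheme \<Rightarrow> nat set \<times> 'e \<Rightarrow> nat set \<times> 'e \<Rightarrow> bool" where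
  "baseE K a b \<longleftrightarrow> (\<exists>I J e. I \<in> IK K \<and> J \<in> IK K \<and> I \<subseteq> J \<and> e \<in> prpre K I (Uij K I J) \<and>
                      a = (I, e) \<and> b = (J, Phij K I J e))"

definition relU :: "('x, 'u, 'e, 'z) katlas_scheme \<Rightarrow> ((nat set \<times> 'u) \<times> (nat set \<times> 'u)) set" where
  "relU K = {(a, b). a \<in> domU K \<and> b \<in> domU K \<and> equivclp (baseU K) a b}"

definition relE :: "('x, 'u, 'e, 'z) katlas_scheme \<Rightarrow> ((nat set \<times> 'e) \<times> (nat set \<times> 'e)) set" where
  "relE K = {(a, b). a \<in> domE K \<and> b \<in> domE K \<and> equivclp (baseE K) a b}"

definition piK :: "('x, 'u, 'e, 'z) katlas_scheme \<Rightarrow> nat set \<times> 'u \<Rightarrow> (nat set \<times> 'u) set" where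
  "piK K a = relU K `` {a}"

definition piE :: "('x, 'u, 'e, 'z) katlas_scheme \<Rightarrow> nat set \<times> 'e \<Rightarrow> (nat set \<times> 'e) set" where
  "piE K a = relE K `` {a}"

end

theory Submission imports Defs begin

lemma emb_inj: "embedding_map X Y f \<Longrightarrow> inj_on f (topspace X)"
  unfolding embedding_map_def using homeomorphic_imp_injective_map by blast

lemma emb_into: "embedding_map X Y f \<Longrightarrow> x \<in> topspace X \<Longrightarrow> f x \<in> topspace Y"
  unfolding embedding_map_def using homeomorphic_imp_surjective_map
  by (metis image_eqI inf.cobounded1 subsetD topspace_subtopology)

lemma homeo_img: "homeomorphic_map (subtopology U Z) (subtopology X F) f \<Longrightarrow> Z \<subseteq> topspace U
   \<Longrightarrow> f ` Z = topspace X \<inter> F"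
  using homeomorphic_imp_surjective_map by (metis inf.absorb_iff2 topspace_subtopology)

lemma homeo_inj: "homeomorphic_map (subtopology U Z) (subtopology X F) f \<Longrightarrow> Z \<subseteq> topspace U
   \<Longrightarrow> inj_on f Z"
  using homeomorphic_imp_injective_map by (metis inf.absorb_iff2 topspace_subtopology)

lemma cm_in: "continuous_map X Y f \<Longrightarrow> x \<in> topspace X \<Longrightarrow> f x \<in> topspace Y"
  using continuous_map_image_subset_topspace by blast

locale tka =
  fixes X :: "'x topology" and K :: "('x,'u,'e) katlas"
  assumes atl: "is_top_katlas X K" and filt: "is_filtered K" and tame: "is_tame K"
begin

lemma atl_charts: "\<forall>J\<in>IK K. is_kchart X (Ut K J) (Et K J) (pr K J) (zr K J) (sc K J) (psi K J) (footprint K J)"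
  apply (insert atl)
  apply (unfold is_top_katlas_def)
  apply (elim conjE, assumption)
  done
lemma atl_cc: "\<forall>I\<in>IK K. \<forall>J\<in>IK K. I \<subset> J \<longrightarrow> is_coord_change X K I J"
  apply (insert atl)
  apply (unfold is_top_katlas_def)
  apply (elim conjE, assumption)
  done
lemma atl_coc: "\<forall>I\<in>IK K. \<forall>J\<in>IK K. \<forall>L\<in>IK K. I \<subset> J \<and> J \<subset> L \<longrightarrow>
        (\<forall>e\<in>prpre K I ((UU K I J \<inter> phi K I J -` UU K J L) \<inter> UU K I L).
            Phi K J L (Phi K I J e) = Phi K I L e) \<and>
        UU K I J \<inter> phi K I J -` UU K J L \<subseteq> UU K I L"
  apply (insert atl)
  apply (unfold is_top_katlas_def)
  apply (elim conjE, assumption)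
  done

lemma chart: "I \<in> IK K \<Longrightarrow> is_kchart X (Ut K I) (Et K I) (pr K I) (zr K I) (sc K I) (psi K I) (footprint K I)"
  using atl_charts by blast

lemma cc: "I \<in> IK K \<Longrightarrow> J \<in> IK K \<Longrightarrow> I \<subset> J \<Longrightarrow> is_coord_change X K I J"
  using atl_cc by blast

lemma chartD: assumes "I \<in> IK K"
  shows "continuous_map (Et K I) (Ut K I) (pr K I)" "continuous_map (Ut K I) (Et K I) (zr K I)"
    "continuous_map (Ut K I) (Et K I) (sc K I)" "\<forall>x\<in>topspace (Ut K I). pr K I (zr K I x) = x"
    "\<forall>x\<in>topspace (Ut K I). pr K I (sc K I x) = x"
    "homeomorphic_map (subtopology (Ut K I) (chart_zeros K I)) (subtopology X (footprint K I)) (psi K I)"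
  apply (insert chart[OF assms])
  apply (unfold is_kchart_def chart_zeros_def)
  apply (elim conjE, assumption)+
  done

lemma pr_zr: "I \<in> IK K \<Longrightarrow> x \<in> topspace (Ut K I) \<Longrightarrow> pr K I (zr K I x) = x"
  using chartD(4) by blast
lemma pr_sc: "I \<in> IK K \<Longrightarrow> x \<in> topspace (Ut K I) \<Longrightarrow> pr K I (sc K I x) = x"
  using chartD(5) by blast
lemma zr_in: "I \<in> IK K \<Longrightarrow> x \<in> topspace (Ut K I) \<Longrightarrow> zr K I x \<in> topspace (Et K I)"
  by (rule cm_in[OF chartD(2)])
lemma sc_in: "I \<in> IK K \<Longrightarrow> x \<in> topspace (Ut K I) \<Longrightarrow> sc K I x \<in> topspace (Et K I)"
  by (rule cm_in[OF chartD(3)])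
lemma pr_in: "I \<in> IK K \<Longrightarrow> e \<in> topspace (Et K I) \<Longrightarrow> pr K I e \<in> topspace (Ut K I)"
  by (rule cm_in[OF chartD(1)])

lemma zeros_sub: "chart_zeros K I \<subseteq> topspace (Ut K I)"
  unfolding chart_zeros_def zeroset_def by auto

lemma psi_img: "I \<in> IK K \<Longrightarrow> psi K I ` chart_zeros K I = topspace X \<inter> footprint K I"
  by (rule homeo_img[OF chartD(6) zeros_sub])

lemma ccD: assumes "I \<in> IK K" "J \<in> IK K" "I \<subset> J"
  shows "openin (Ut K I) (UU K I J)"
   "UU K I J \<inter> chart_zeros K I = {x \<in> chart_zeros K I. psi K I x \<in> footprint K I \<inter> footprint K J}"
   "embedding_map (subtopology (Et K I) (prpre K I (UU K I J))) (Et K J) (Phi K I J)"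
   "embedding_map (subtopology (Ut K I) (UU K I J)) (Ut K J) (phi K I J)"
   "(\<forall>e\<in>prpre K I (UU K I J). pr K J (Phi K I J e) = phi K I J (pr K I e))"
   "(\<forall>x\<in>UU K I J. zr K J (phi K I J x) = Phi K I J (zr K I x))"
   "(\<forall>x\<in>UU K I J. sc K J (phi K I J x) = Phi K I J (sc K I x))"
   "(\<forall>x\<in>UU K I J \<inter> chart_zeros K I.
        phi K I J x = inv_into (chart_zeros K J) (psi K J) (psi K I x))"
  apply (insert cc[OF assms])
  apply (unfold is_coord_change_def)
  apply (elim conjE, assumption)+
  done

lemma UU_sub: "I \<in> IK K \<Longrightarrow> J \<in> IK K \<Longrightarrow> I \<subset> J \<Longrightarrow> UU K I J \<subseteq> topspace (Ut K I)"
  by (rule openin_subset[OF ccD(1)])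

lemma topU: "I \<in> IK K \<Longrightarrow> J \<in> IK K \<Longrightarrow> I \<subset> J \<Longrightarrow> topspace (subtopology (Ut K I) (UU K I J)) = UU K I J"
  using UU_sub by auto
lemma prpre_sub: "prpre K I A \<subseteq> topspace (Et K I)"
  unfolding prpre_def by auto
lemma topE: "topspace (subtopology (Et K I) (prpre K I A)) = prpre K I A"
  using prpre_sub by auto

lemma phi_in: "I \<in> IK K \<Longrightarrow> J \<in> IK K \<Longrightarrow> I \<subset> J \<Longrightarrow> x \<in> UU K I J \<Longrightarrow> phi K I J x \<in> topspace (Ut K J)"
  using emb_into[OF ccD(4)] topU by metis

lemma phi_inj: "I \<in> IK K \<Longrightarrow> J \<in> IK K \<Longrightarrow> I \<subset> J \<Longrightarrow> inj_on (phi K I J) (UU K I J)"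
  using emb_inj[OF ccD(4)] topU by metis

lemma Phi_in: "I \<in> IK K \<Longrightarrow> J \<in> IK K \<Longrightarrow> I \<subset> J \<Longrightarrow> e \<in> prpre K I (UU K I J) \<Longrightarrow> Phi K I J e \<in> topspace (Et K J)"
  using emb_into[OF ccD(3)] topE by metis

lemma Phi_inj: "I \<in> IK K \<Longrightarrow> J \<in> IK K \<Longrightarrow> I \<subset> J \<Longrightarrow> inj_on (Phi K I J) (prpre K I (UU K I J))"
  using emb_inj[OF ccD(3)] topE by metis

lemma pr_Phi: "I \<in> IK K \<Longrightarrow> J \<in> IK K \<Longrightarrow> I \<subset> J \<Longrightarrow> e \<in> prpre K I (UU K I J) \<Longrightarrow> pr K J (Phi K I J e) = phi K I J (pr K I e)"
  using ccD(5) by blast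
lemma zr_phi: "I \<in> IK K \<Longrightarrow> J \<in> IK K \<Longrightarrow> I \<subset> J \<Longrightarrow> x \<in> UU K I J \<Longrightarrow> zr K J (phi K I J x) = Phi K I J (zr K I x)"
  using ccD(6) by blast
lemma sc_phi: "I \<in> IK K \<Longrightarrow> J \<in> IK K \<Longrightarrow> I \<subset> J \<Longrightarrow> x \<in> UU K I J \<Longrightarrow> sc K J (phi K I J x) = Phi K I J (sc K I x)"
  using ccD(7) by blast
lemma phi_zeros: "I \<in> IK K \<Longrightarrow> J \<in> IK K \<Longrightarrow> I \<subset> J \<Longrightarrow> x \<in> UU K I J \<Longrightarrow> x \<in> chart_zeros K I \<Longrightarrow>
   phi K I J x = inv_into (chart_zeros K J) (psi K J) (psi K I x)"
  using ccD(8) by blast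
lemma UU_zeros: "I \<in> IK K \<Longrightarrow> J \<in> IK K \<Longrightarrow> I \<subset> J \<Longrightarrow>
   UU K I J \<inter> chart_zeros K I = {x \<in> chart_zeros K I. psi K I x \<in> footprint K I \<inter> footprint K J}"
  using ccD(2) by blast

lemma Phi_cocycle: "I \<in> IK K \<Longrightarrow> J \<in> IK K \<Longrightarrow> L \<in> IK K \<Longrightarrow> I \<subset> J \<Longrightarrow> J \<subset> L \<Longrightarrow>
   e \<in> prpre K I ((UU K I J \<inter> phi K I J -` UU K J L) \<inter> UU K I L) \<Longrightarrow> Phi K J L (Phi K I J e) = Phi K I L e"
  using atl_coc by blast
lemma UU_cocycle: "I \<in> IK K \<Longrightarrow> J \<in> IK K \<Longrightarrow> L \<in> IK K \<Longrightarrow> I \<subset> J \<Longrightarrow> J \<subset> L \<Longrightarrow>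
   x \<in> UU K I J \<Longrightarrow> phi K I J x \<in> UU K J L \<Longrightarrow> x \<in> UU K I L"
  using atl_coc by blast


lemma Uij_IK: "x \<in> Uij K I J \<Longrightarrow> J \<in> IK K"
  unfolding Uij_def by (auto split: if_splits)

lemma Uij_strict: "J \<in> IK K \<Longrightarrow> I \<noteq> J \<Longrightarrow> Uij K I J = UU K I J"
  unfolding Uij_def by auto

lemma Uij_refl: "J \<in> IK K \<Longrightarrow> Uij K J J = topspace (Ut K J)"
  unfolding Uij_def by auto

lemma IK_sub: "J \<in> IK K \<Longrightarrow> I \<subseteq> J \<Longrightarrow> I \<noteq> {} \<Longrightarrow> I \<in> IK K"
  unfolding IK_def footprint_def by blast

lemma footprint_Un: "footprint K (I \<union> J) = footprint K I \<inter> footprint K J"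
  unfolding footprint_def by auto

lemma G1: "I \<in> IK K \<Longrightarrow> I \<subseteq> J \<Longrightarrow> x \<in> Uij K I J \<Longrightarrow> x \<in> topspace (Ut K I) \<and> phij K I J x \<in> topspace (Ut K J)"
proof -
  assume a: "I \<in> IK K" "I \<subseteq> J" "x \<in> Uij K I J"
  have J: "J \<in> IK K" by (rule Uij_IK[OF a(3)])
  show ?thesis
  proof (cases "I = J")
    case True thus ?thesis using a J by (simp add: Uij_refl phij_def)
  next
    case False
    hence "I \<subset> J" using a by auto
    thus ?thesis using a J False UU_sub phi_in by (auto simp: Uij_strict phij_def)
  qed
qed

lemma G2: "I \<in> IK K \<Longrightarrow> J \<in> IK K \<Longrightarrow> I \<subseteq> J \<Longrightarrow> inj_on (phij K I J) (Uij K I J)"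
  by (cases "I = J") (auto simp: phij_def Uij_strict phi_inj psubset_eq)

lemma GE1: "I \<in> IK K \<Longrightarrow> I \<subseteq> J \<Longrightarrow> e \<in> prpre K I (Uij K I J) \<Longrightarrow>
   Phij K I J e \<in> topspace (Et K J) \<and> pr K J (Phij K I J e) = phij K I J (pr K I e)"
proof -
  assume a: "I \<in> IK K" "I \<subseteq> J" "e \<in> prpre K I (Uij K I J)"
  hence J: "J \<in> IK K" using Uij_IK unfolding prpre_def by blast
  show ?thesis
  proof (cases "I = J")
    case True thus ?thesis using a J by (simp add: Phij_def phij_def prpre_def)
  next
    case False
    hence "I \<subset> J" using a by auto
    thus ?thesis using a J False Phi_in pr_Phi by (auto simp: Uij_strict phij_def Phij_def)
  qed
qed

lemma GE2: "I \<in> IK K \<Longrightarrow> J \<in> IK K \<Longrightarrow> I \<subseteq> J \<Longrightarrow> inj_on (Phij K I J) (prpre K I (Uij K I J))"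
  by (cases "I = J") (auto simp: Phij_def Uij_strict Phi_inj psubset_eq)

lemma GE4: "I \<in> IK K \<Longrightarrow> I \<subseteq> J \<Longrightarrow> x \<in> Uij K I J \<Longrightarrow>
   Phij K I J (zr K I x) = zr K J (phij K I J x) \<and> Phij K I J (sc K I x) = sc K J (phij K I J x)"
proof -
  assume a: "I \<in> IK K" "I \<subseteq> J" "x \<in> Uij K I J"
  have J: "J \<in> IK K" by (rule Uij_IK[OF a(3)])
  show ?thesis
  proof (cases "I = J")
    case True thus ?thesis by (simp add: Phij_def phij_def)
  next
    case False
    hence "I \<subset> J" using a by auto
    thus ?thesis using a J False zr_phi sc_phi by (auto simp: Uij_strict phij_def Phij_def)
  qed
qed

lemma GE3: "I \<in> IK K \<Longrightarrow> J \<in> IK K \<Longrightarrow> L \<in> IK K \<Longrightarrow> I \<subseteq> J \<Longrightarrow> J \<subseteq> L \<Longrightarrow>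
   e \<in> prpre K I (Uij K I J) \<Longrightarrow> Phij K I J e \<in> prpre K J (Uij K J L) \<Longrightarrow>
   e \<in> prpre K I (Uij K I L) \<and> Phij K J L (Phij K I J e) = Phij K I L e"
proof -
  assume a: "I \<in> IK K" "J \<in> IK K" "L \<in> IK K" "I \<subseteq> J" "J \<subseteq> L"
     "e \<in> prpre K I (Uij K I J)" "Phij K I J e \<in> prpre K J (Uij K J L)"
  show ?thesis
  proof (cases "I = J")
    case True thus ?thesis using a by (simp add: Phij_def)
  next
    case IJ: False
    show ?thesis
    proof (cases "J = L")
      case True thus ?thesis using a by (simp add: Phij_def)
    next
      case JL: False
      have s: "I \<subset> J" "J \<subset> L" "I \<subset> L" "I \<noteq> L" using a IJ JL by auto
      have e1: "pr K I e \<in> UU K I J" "e \<in> topspace (Et K I)"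
        using a(6) a(2) IJ by (auto simp: prpre_def Uij_strict)
      have "pr K J (Phi K I J e) \<in> UU K J L" using a(7) a(3) JL IJ by (auto simp: prpre_def Uij_strict Phij_def)
      hence e2: "phi K I J (pr K I e) \<in> UU K J L" using pr_Phi[OF a(1,2) s(1)] e1 by (auto simp: prpre_def)
      have e3: "pr K I e \<in> UU K I L" using UU_cocycle[OF a(1,2,3) s(1,2) e1(1) e2] .
      have "Phi K J L (Phi K I J e) = Phi K I L e"
        by (rule Phi_cocycle[OF a(1,2,3) s(1,2)]) (use e1 e2 e3 in \<open>auto simp: prpre_def\<close>)
      thus ?thesis using e1 e3 a(3) s IJ JL by (auto simp: prpre_def Uij_strict Phij_def)
    qed
  qed
qed

lemma G3: "I \<in> IK K \<Longrightarrow> J \<in> IK K \<Longrightarrow> L \<in> IK K \<Longrightarrow> I \<subseteq> J \<Longrightarrow> J \<subseteq> L \<Longrightarrow>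
   x \<in> Uij K I J \<Longrightarrow> phij K I J x \<in> Uij K J L \<Longrightarrow>
   x \<in> Uij K I L \<and> phij K J L (phij K I J x) = phij K I L x"
proof -
  assume a: "I \<in> IK K" "J \<in> IK K" "L \<in> IK K" "I \<subseteq> J" "J \<subseteq> L"
     "x \<in> Uij K I J" "phij K I J x \<in> Uij K J L"
  have xI: "x \<in> topspace (Ut K I)" using G1 a by blast
  define e where "e = zr K I x"
  have pe: "pr K I e = x" "e \<in> topspace (Et K I)" using pr_zr zr_in a(1) xI by (auto simp: e_def)
  have e1: "e \<in> prpre K I (Uij K I J)" using pe a by (auto simp: prpre_def)
  have g1: "Phij K I J e \<in> topspace (Et K J)" "pr K J (Phij K I J e) = phij K I J x"
    using GE1[OF a(1,4) e1] pe by auto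
  have e2: "Phij K I J e \<in> prpre K J (Uij K J L)" using g1 a(7) by (auto simp: prpre_def)
  from GE3[OF a(1-5) e1 e2] have r: "e \<in> prpre K I (Uij K I L)" "Phij K J L (Phij K I J e) = Phij K I L e" by auto
  have "x \<in> Uij K I L" using r pe by (auto simp: prpre_def)
  moreover have "pr K L (Phij K J L (Phij K I J e)) = phij K J L (phij K I J x)"
    using GE1[OF a(2,5) e2] g1 by simp
  moreover have "pr K L (Phij K I L e) = phij K I L x" using GE1[OF a(1) _ r(1)] a pe by auto
  ultimately show ?thesis using r by simp
qed

end

definition R2 :: "('x, 'u, 'e, 'z) katlas_scheme \<Rightarrow> nat set \<Rightarrow> 'u \<Rightarrow> nat set \<Rightarrow> 'u \<Rightarrow> bool" where
  "R2 K I x J y \<longleftrightarrow> I \<union> J \<in> IK K \<and> x \<in> Uij K I (I \<union> J) \<and> y \<in> Uij K J (I \<union> J) \<and>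
             phij K I (I \<union> J) x = phij K J (I \<union> J) y"

definition RE2 :: "('x, 'u, 'e, 'z) katlas_scheme \<Rightarrow> nat set \<Rightarrow> 'e \<Rightarrow> nat set \<Rightarrow> 'e \<Rightarrow> bool" where
  "RE2 K I e J f \<longleftrightarrow> I \<union> J \<in> IK K \<and> e \<in> prpre K I (Uij K I (I \<union> J)) \<and>
             f \<in> prpre K J (Uij K J (I \<union> J)) \<and> Phij K I (I \<union> J) e = Phij K J (I \<union> J) f"

context tka begin

lemma tameD:
  shows "\<forall>I\<in>IK K. \<forall>J\<in>IK K. \<forall>L\<in>IK K. I \<subseteq> J \<and> I \<subseteq> L \<longrightarrow>
        Uij K I J \<inter> Uij K I L = Uij K I (J \<union> L)"
   "\<forall>I\<in>IK K. \<forall>J\<in>IK K. \<forall>L\<in>IK K. I \<subseteq> J \<and> J \<subseteq> L \<longrightarrow>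
        phij K I J ` Uij K I L = Uij K J L \<inter> {x \<in> topspace (Ut K J). sc K J x \<in> EE K I J}"
  apply (insert tame)
  apply (unfold is_tame_def)
  apply (elim conjE, assumption)+
  done

lemma filtD:
  shows "\<forall>J\<in>IK K. EE K J J = topspace (Et K J) \<and> EE K {} J = zr K J ` topspace (Ut K J)"
   "\<forall>J\<in>IK K. \<forall>L\<in>IK K. \<forall>I. I \<subseteq> J \<and> J \<subset> L \<longrightarrow>
        Phi K J L ` (prpre K J (UU K J L) \<inter> EE K I J)
          = EE K I L \<inter> prpre K L (phi K J L ` UU K J L)"
   "\<forall>J\<in>IK K. \<forall>I H. I \<subseteq> J \<and> H \<subseteq> J \<longrightarrow> EE K I J \<inter> EE K H J = EE K (I \<inter> H) J"
  apply (insert filt)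
  apply (unfold is_filtered_def)
  apply (elim conjE, assumption)+
  done

lemma T1: "I \<in> IK K \<Longrightarrow> J \<in> IK K \<Longrightarrow> L \<in> IK K \<Longrightarrow> I \<subseteq> J \<Longrightarrow> I \<subseteq> L \<Longrightarrow>
  Uij K I J \<inter> Uij K I L = Uij K I (J \<union> L)"
  apply (rule tameD(1)[rule_format])
  apply assumption+
  apply (rule conjI; assumption)
  done

lemma T2: "I \<in> IK K \<Longrightarrow> J \<in> IK K \<Longrightarrow> L \<in> IK K \<Longrightarrow> I \<subseteq> J \<Longrightarrow> J \<subseteq> L \<Longrightarrow>
  phij K I J ` Uij K I L = Uij K J L \<inter> {x \<in> topspace (Ut K J). sc K J x \<in> EE K I J}"
  apply (rule tameD(2)[rule_format])
  apply assumption+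
  apply (rule conjI; assumption)
  done

lemma T3: "I \<in> IK K \<Longrightarrow> J \<in> IK K \<Longrightarrow> I \<subseteq> J \<Longrightarrow> J \<subseteq> L \<Longrightarrow> x \<in> Uij K I L \<Longrightarrow> x \<in> Uij K I J"
proof -
  assume a: "I \<in> IK K" "J \<in> IK K" "I \<subseteq> J" "J \<subseteq> L" "x \<in> Uij K I L"
  have L: "L \<in> IK K" using Uij_IK a(5) .
  have "J \<union> L = L" using a by auto
  thus ?thesis using T1[OF a(1,2) L a(3)] a by auto
qed

lemma T4: "I \<in> IK K \<Longrightarrow> J \<in> IK K \<Longrightarrow> I \<subseteq> J \<Longrightarrow> J \<subseteq> L \<Longrightarrow> x \<in> Uij K I L \<Longrightarrow> phij K I J x \<in> Uij K J L"
proof -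
  assume a: "I \<in> IK K" "J \<in> IK K" "I \<subseteq> J" "J \<subseteq> L" "x \<in> Uij K I L"
  have L: "L \<in> IK K" using Uij_IK a(5) .
  show ?thesis using T2[OF a(1,2) L a(3,4)] a(5) by blast
qed

lemma T5: "I \<in> IK K \<Longrightarrow> I \<subseteq> J \<Longrightarrow> x \<in> Uij K I J \<Longrightarrow> sc K J (phij K I J x) \<in> EE K I J"
proof -
  assume a: "I \<in> IK K" "I \<subseteq> J" "x \<in> Uij K I J"
  have L: "J \<in> IK K" using Uij_IK a(3) .
  show ?thesis using T2[OF a(1) L L a(2) order_refl] a(3) by blast
qed

lemma T6: "H \<in> IK K \<Longrightarrow> H \<subseteq> J \<Longrightarrow> J \<in> IK K \<Longrightarrow> v \<in> topspace (Ut K J) \<Longrightarrow> sc K J v \<in> EE K H J \<Longrightarrow>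
   \<exists>w \<in> Uij K H J. phij K H J w = v"
proof -
  assume a: "H \<in> IK K" "H \<subseteq> J" "J \<in> IK K" "v \<in> topspace (Ut K J)" "sc K J v \<in> EE K H J"
  have "v \<in> Uij K J J \<inter> {x \<in> topspace (Ut K J). sc K J x \<in> EE K H J}" using a by (simp add: Uij_refl)
  hence "v \<in> phij K H J ` Uij K H J" using T2[OF a(1) a(3) a(3) a(2) order_refl] by simp
  thus ?thesis by auto
qed

lemma Fint: "J \<in> IK K \<Longrightarrow> I \<subseteq> J \<Longrightarrow> H \<subseteq> J \<Longrightarrow> EE K I J \<inter> EE K H J = EE K (I \<inter> H) J"
  apply (rule filtD(3)[rule_format])
  apply assumption+
  apply (rule conjI; assumption)
  done

lemma Fzero: "J \<in> IK K \<Longrightarrow> EE K {} J = zr K J ` topspace (Ut K J)"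
  by (rule filtD(1)[rule_format, THEN conjunct2])

lemma Ftop: "J \<in> IK K \<Longrightarrow> EE K J J = topspace (Et K J)"
  by (rule filtD(1)[rule_format, THEN conjunct1])

lemma Fphi: "J \<in> IK K \<Longrightarrow> L \<in> IK K \<Longrightarrow> I \<subseteq> J \<Longrightarrow> J \<subset> L \<Longrightarrow>
   Phi K J L ` (prpre K J (UU K J L) \<inter> EE K I J) = EE K I L \<inter> prpre K L (phi K J L ` UU K J L)"
  apply (rule filtD(2)[rule_format])
  apply assumption+
  apply (rule conjI; assumption)
  done

lemma F1: "I \<in> IK K \<Longrightarrow> I \<subseteq> L \<Longrightarrow> e \<in> prpre K I (Uij K I L) \<Longrightarrow> Phij K I L e \<in> EE K I L"
proof -
  assume a: "I \<in> IK K" "I \<subseteq> L" "e \<in> prpre K I (Uij K I L)"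
  have L: "L \<in> IK K" using Uij_IK a(3) unfolding prpre_def by blast
  show ?thesis
  proof (cases "I = L")
    case True thus ?thesis using a Ftop by (simp add: Phij_def prpre_def)
  next
    case False
    hence "I \<subset> L" using a by auto
    hence "Phi K I L e \<in> Phi K I L ` (prpre K I (UU K I L) \<inter> EE K I I)"
      using a False L Ftop[OF a(1)] by (auto simp: Uij_strict prpre_def)
    thus ?thesis using Fphi[OF a(1) L order_refl \<open>I \<subset> L\<close>] False by (auto simp: Phij_def)
  qed
qed

lemma F2: "H \<in> IK K \<Longrightarrow> H \<subseteq> L \<Longrightarrow> g \<in> EE K H L \<Longrightarrow> g \<in> topspace (Et K L) \<Longrightarrow>
    w0 \<in> Uij K H L \<Longrightarrow> pr K L g = phij K H L w0 \<Longrightarrow> \<exists>w \<in> prpre K H (Uij K H L). Phij K H L w = g"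
proof -
  assume a: "H \<in> IK K" "H \<subseteq> L" "g \<in> EE K H L" "g \<in> topspace (Et K L)" "w0 \<in> Uij K H L"
    "pr K L g = phij K H L w0"
  have L: "L \<in> IK K" using Uij_IK a(5) .
  show ?thesis
  proof (cases "H = L")
    case True thus ?thesis using a L pr_in[OF L a(4)] by (auto simp: Phij_def prpre_def Uij_refl intro!: bexI[of _ g])
  next
    case False
    hence s: "H \<subset> L" using a by auto
    have "g \<in> EE K H L \<inter> prpre K L (phi K H L ` UU K H L)"
      using a False L by (auto simp: prpre_def Uij_strict phij_def)
    hence "g \<in> Phi K H L ` (prpre K H (UU K H L) \<inter> EE K H H)" using Fphi[OF a(1) L order_refl s] by simp
    thus ?thesis using False L by (auto simp: Phij_def Uij_strict)
  qed
qed

lemma R2_sym: "R2 K I x J y \<Longrightarrow> R2 K J y I x"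
  unfolding R2_def by (simp add: Un_commute)
lemma RE2_sym: "RE2 K I x J y \<Longrightarrow> RE2 K J y I x"
  unfolding RE2_def by (simp add: Un_commute)

lemma R2_trans:
  assumes I: "I \<in> IK K" and J: "J \<in> IK K" and L: "L \<in> IK K"
    and r1: "R2 K I x J y" and r2: "R2 K J y L z"
  shows "R2 K I x L z \<and> x \<in> Uij K I (I \<union> J \<union> L) \<and> z \<in> Uij K L (I \<union> J \<union> L) \<and>
     phij K I (I \<union> J \<union> L) x = phij K J (I \<union> J \<union> L) y \<and>
     phij K L (I \<union> J \<union> L) z = phij K J (I \<union> J \<union> L) y"
proof -
  define A where "A = I \<union> J"
  define B where "B = J \<union> L"
  define M where "M = I \<union> J \<union> L"
  define C where "C = I \<union> L"
  have A: "A \<in> IK K" "x \<in> Uij K I A" "y \<in> Uij K J A" "phij K I A x = phij K J A y"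
    using r1 unfolding R2_def A_def by auto
  have B: "B \<in> IK K" "z \<in> Uij K L B" "y \<in> Uij K J B" "phij K L B z = phij K J B y"
    using r2 unfolding R2_def B_def by (auto simp: Un_commute)
  have "y \<in> Uij K J M" using T1[OF J A(1) B(1)] A(3) B(3) unfolding A_def B_def M_def
    by (metis Int_iff Un_assoc Un_left_absorb sup.cobounded1 sup.cobounded2 sup_commute)
  hence yM: "y \<in> Uij K J M" .
  hence M: "M \<in> IK K" using Uij_IK by blast
  have v1: "phij K J A y \<in> Uij K A M" using T4[OF J A(1) _ _ yM] unfolding A_def M_def by auto
  have xM: "x \<in> Uij K I M" and x2: "phij K A M (phij K I A x) = phij K I M x"
    using G3[OF I A(1) M _ _ A(2)] v1 A(4) unfolding A_def M_def by auto
  have y2: "phij K A M (phij K J A y) = phij K J M y"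
    using G3[OF J A(1) M _ _ A(3) v1] unfolding A_def M_def by auto
  have v2: "phij K J B y \<in> Uij K B M" using T4[OF J B(1) _ _ yM] unfolding B_def M_def by auto
  have zM: "z \<in> Uij K L M" and z2: "phij K B M (phij K L B z) = phij K L M z"
    using G3[OF L B(1) M _ _ B(2)] v2 B(4) unfolding B_def M_def by auto
  have y3: "phij K B M (phij K J B y) = phij K J M y"
    using G3[OF J B(1) M _ _ B(3) v2] unfolding B_def M_def by auto
  have eqM: "phij K I M x = phij K J M y" "phij K L M z = phij K J M y"
    using x2 y2 A(4) z2 y3 B(4) by auto
  have C: "C \<in> IK K" using IK_sub[OF M, of C] I unfolding C_def M_def IK_def by auto
  have CM: "C \<subseteq> M" unfolding C_def M_def by auto
  have xC: "x \<in> Uij K I C" using T3[OF I C _ _ xM] unfolding C_def M_def by auto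
  have zC: "z \<in> Uij K L C" using T3[OF L C _ _ zM] unfolding C_def M_def by auto
  have xC2: "phij K I C x \<in> Uij K C M" using T4[OF I C _ _ xM] unfolding C_def M_def by auto
  have zC2: "phij K L C z \<in> Uij K C M" using T4[OF L C _ _ zM] unfolding C_def M_def by auto
  have "phij K C M (phij K I C x) = phij K I M x" using G3[OF I C M _ _ xC xC2] unfolding C_def M_def by auto
  moreover have "phij K C M (phij K L C z) = phij K L M z" using G3[OF L C M _ _ zC zC2] unfolding C_def M_def by auto
  ultimately have "phij K I C x = phij K L C z"
    using G2[OF C M CM] eqM xC2 zC2 unfolding C_def M_def by (auto simp: inj_on_def)
  thus ?thesis using C xC zC xM zM eqM unfolding R2_def C_def M_def by auto
qed

lemma RE2_R2: "I \<in> IK K \<Longrightarrow> J \<in> IK K \<Longrightarrow> RE2 K I e J f \<Longrightarrow> R2 K I (pr K I e) J (pr K J f)"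
proof -
  assume a: "I \<in> IK K" "J \<in> IK K" "RE2 K I e J f"
  note J = a(2)
  show ?thesis using a GE1[OF a(1), of "I \<union> J" e] GE1[OF J, of "I \<union> J" f]
    unfolding RE2_def R2_def by (auto simp: prpre_def)
qed

end

context tka begin

lemma RE2_trans:
  assumes I: "I \<in> IK K" and J: "J \<in> IK K" and L: "L \<in> IK K"
    and r1: "RE2 K I e J f" and r2: "RE2 K J f L g"
  shows "RE2 K I e L g"
proof -
  define A where "A = I \<union> J"
  define B where "B = J \<union> L"
  define M where "M = I \<union> J \<union> L"
  define C where "C = I \<union> L"
  define x where "x = pr K I e"
  define y where "y = pr K J f"
  define z where "z = pr K L g"
  have eA: "A \<in> IK K" "e \<in> prpre K I (Uij K I A)" "f \<in> prpre K J (Uij K J A)" "Phij K I A e = Phij K J A f"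
    using r1 unfolding RE2_def A_def by auto
  have eB: "B \<in> IK K" "g \<in> prpre K L (Uij K L B)" "f \<in> prpre K J (Uij K J B)" "Phij K L B g = Phij K J B f"
    using r2 unfolding RE2_def B_def by (auto simp: Un_commute)
  have R1: "R2 K I x J y" using RE2_R2[OF I J r1] unfolding x_def y_def .
  have R2': "R2 K J y L z" using RE2_R2[OF J L r2] unfolding z_def y_def .
  note T = R2_trans[OF I J L R1 R2']
  have xM: "x \<in> Uij K I M" and zM: "z \<in> Uij K L M" and C: "C \<in> IK K"
    using T unfolding M_def R2_def C_def by auto
  have M: "M \<in> IK K" using Uij_IK xM .
  have CM: "C \<subseteq> M" unfolding C_def M_def by auto
  have vA: "Phij K I A e \<in> prpre K A (Uij K A M)"
    using GE1[OF I _ eA(2)] T4[OF I eA(1) _ _ xM] unfolding A_def M_def x_def by (auto simp: prpre_def)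
  have 1: "Phij K A M (Phij K I A e) = Phij K I M e"
    using GE3[OF I eA(1) M _ _ eA(2) vA] unfolding A_def M_def by auto
  have 2: "Phij K A M (Phij K J A f) = Phij K J M f"
    using GE3[OF J eA(1) M _ _ eA(3)] vA eA(4) unfolding A_def M_def by auto
  have wB: "Phij K L B g \<in> prpre K B (Uij K B M)"
    using GE1[OF L _ eB(2)] T4[OF L eB(1) _ _ zM] unfolding B_def M_def z_def by (auto simp: prpre_def)
  have 3: "Phij K B M (Phij K L B g) = Phij K L M g"
    using GE3[OF L eB(1) M _ _ eB(2) wB] unfolding B_def M_def by auto
  have 4: "Phij K B M (Phij K J B f) = Phij K J M f"
    using GE3[OF J eB(1) M _ _ eB(3)] wB eB(4) unfolding B_def M_def by auto
  have eqM: "Phij K I M e = Phij K L M g" using 1 2 3 4 eA(4) eB(4) by simp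
  have eE: "e \<in> topspace (Et K I)" "g \<in> topspace (Et K L)" using eA eB by (auto simp: prpre_def)
  have xC: "x \<in> Uij K I C" using T3[OF I C _ _ xM] unfolding C_def M_def by auto
  have zC: "z \<in> Uij K L C" using T3[OF L C _ _ zM] unfolding C_def M_def by auto
  have eC: "e \<in> prpre K I (Uij K I C)" using xC eE unfolding x_def by (auto simp: prpre_def)
  have gC: "g \<in> prpre K L (Uij K L C)" using zC eE unfolding z_def by (auto simp: prpre_def)
  have eC2: "Phij K I C e \<in> prpre K C (Uij K C M)"
    using GE1[OF I _ eC] T4[OF I C _ _ xM] unfolding C_def M_def x_def by (auto simp: prpre_def)
  have gC2: "Phij K L C g \<in> prpre K C (Uij K C M)"
    using GE1[OF L _ gC] T4[OF L C _ _ zM] unfolding C_def M_def z_def by (auto simp: prpre_def)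
  have "Phij K C M (Phij K I C e) = Phij K I M e" using GE3[OF I C M _ _ eC eC2] unfolding C_def M_def by auto
  moreover have "Phij K C M (Phij K L C g) = Phij K L M g" using GE3[OF L C M _ _ gC gC2] unfolding C_def M_def by auto
  ultimately have "Phij K I C e = Phij K L C g"
    using GE2[OF C M CM] eqM eC2 gC2 unfolding C_def M_def by (auto simp: inj_on_def)
  thus ?thesis using C eC gC unfolding RE2_def C_def by auto
qed

lemma R2_refl: "I \<in> IK K \<Longrightarrow> x \<in> topspace (Ut K I) \<Longrightarrow> R2 K I x I x"
  unfolding R2_def by (simp add: Uij_refl)

lemma RE2_refl: "I \<in> IK K \<Longrightarrow> e \<in> topspace (Et K I) \<Longrightarrow> RE2 K I e I e"
  unfolding RE2_def by (auto simp: Uij_refl prpre_def pr_in)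

lemma baseU_R2: "baseU K a b \<Longrightarrow> a \<in> domU K \<and> b \<in> domU K \<and> R2 K (fst a) (snd a) (fst b) (snd b)"
proof -
  assume "baseU K a b"
  then obtain I J x where h: "I \<in> IK K" "J \<in> IK K" "I \<subseteq> J" "x \<in> Uij K I J" "a = (I, x)" "b = (J, phij K I J x)"
    unfolding baseU_def by blast
  have u: "I \<union> J = J" using h by auto
  show ?thesis using h G1[OF h(1,3,4)] unfolding domU_def R2_def u by (auto simp: Uij_refl phij_def)
qed

lemma baseE_RE2: "baseE K a b \<Longrightarrow> a \<in> domE K \<and> b \<in> domE K \<and> RE2 K (fst a) (snd a) (fst b) (snd b)"
proof -
  assume "baseE K a b"
  then obtain I J e where h: "I \<in> IK K" "J \<in> IK K" "I \<subseteq> J" "e \<in> prpre K I (Uij K I J)" "a = (I, e)" "b = (J, Phij K I J e)"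
    unfolding baseE_def by blast
  have u: "I \<union> J = J" using h by auto
  have x: "pr K I e \<in> Uij K I J" using h(4) by (auto simp: prpre_def)
  show ?thesis using h GE1[OF h(1,3,4)] G1[OF h(1,3) x] unfolding domE_def RE2_def u
    by (auto simp: Uij_refl Phij_def prpre_def)
qed

lemma relU_iff:
  assumes I: "I \<in> IK K" and J: "J \<in> IK K" and x: "x \<in> topspace (Ut K I)" and y: "y \<in> topspace (Ut K J)"
  shows "((I, x), (J, y)) \<in> relU K \<longleftrightarrow> R2 K I x J y"
proof
  assume r: "R2 K I x J y"
  define A where "A = I \<union> J"
  have A: "A \<in> IK K" "x \<in> Uij K I A" "y \<in> Uij K J A" "phij K I A x = phij K J A y"
    using r unfolding R2_def A_def by auto
  have b1: "baseU K (I, x) (A, phij K I A x)" unfolding baseU_def using I A by (auto simp: A_def)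
  have b2: "baseU K (J, y) (A, phij K I A x)" unfolding baseU_def using J A by (auto simp: A_def)
  have "equivclp (baseU K) (I, x) (J, y)"
    using r_into_equivclp[of "baseU K", OF b1] equivclp_sym[OF r_into_equivclp[of "baseU K", OF b2]]
    by (meson transpD transp_equivclp)
  thus "((I, x), (J, y)) \<in> relU K" unfolding relU_def domU_def using I J x y by auto
next
  assume "((I, x), (J, y)) \<in> relU K"
  hence q: "equivclp (baseU K) (I, x) (J, y)" unfolding relU_def by auto
  have "(I, x) = (J, y) \<or> ((J, y) \<in> domU K \<and> R2 K I x (fst (J, y)) (snd (J, y)))"
    using q
  proof (induction rule: equivclp_induct)
    case base thus ?case by simp
  next
    case (step b c)
    from step.hyps(2) have bc: "R2 K (fst b) (snd b) (fst c) (snd c) \<and> b \<in> domU K \<and> c \<in> domU K"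
      using baseU_R2 R2_sym by blast
    show ?case
    proof (cases "(I, x) = b")
      case True thus ?thesis using bc by auto
    next
      case False
      hence "b \<in> domU K" "R2 K I x (fst b) (snd b)" using step.IH by auto
      hence "R2 K I x (fst c) (snd c)" using R2_trans[OF I, of "fst b" "fst c"] bc unfolding domU_def by auto
      thus ?thesis using bc by auto
    qed
  qed
  thus "R2 K I x J y" using R2_refl[OF I x] by auto
qed

lemma relE_iff:
  assumes I: "I \<in> IK K" and J: "J \<in> IK K" and x: "e \<in> topspace (Et K I)" and y: "f \<in> topspace (Et K J)"
  shows "((I, e), (J, f)) \<in> relE K \<longleftrightarrow> RE2 K I e J f"
proof
  assume r: "RE2 K I e J f"
  define A where "A = I \<union> J"
  have A: "A \<in> IK K" "e \<in> prpre K I (Uij K I A)" "f \<in> prpre K J (Uij K J A)" "Phij K I A e = Phij K J A f"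
    using r unfolding RE2_def A_def by auto
  have b1: "baseE K (I, e) (A, Phij K I A e)" unfolding baseE_def using I A by (auto simp: A_def)
  have b2: "baseE K (J, f) (A, Phij K I A e)" unfolding baseE_def using J A by (auto simp: A_def)
  have "equivclp (baseE K) (I, e) (J, f)"
    using r_into_equivclp[of "baseE K", OF b1] equivclp_sym[OF r_into_equivclp[of "baseE K", OF b2]]
    by (meson transpD transp_equivclp)
  thus "((I, e), (J, f)) \<in> relE K" unfolding relE_def domE_def using I J x y by auto
next
  assume "((I, e), (J, f)) \<in> relE K"
  hence q: "equivclp (baseE K) (I, e) (J, f)" unfolding relE_def by auto
  have "(I, e) = (J, f) \<or> ((J, f) \<in> domE K \<and> RE2 K I e (fst (J, f)) (snd (J, f)))"
    using q
  proof (induction rule: equivclp_induct)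
    case base thus ?case by simp
  next
    case (step b c)
    from step.hyps(2) have bc: "RE2 K (fst b) (snd b) (fst c) (snd c) \<and> b \<in> domE K \<and> c \<in> domE K"
      using baseE_RE2 RE2_sym by blast
    show ?case
    proof (cases "(I, e) = b")
      case True thus ?thesis using bc by auto
    next
      case False
      hence "b \<in> domE K" "RE2 K I e (fst b) (snd b)" using step.IH by auto
      hence "RE2 K I e (fst c) (snd c)" using RE2_trans[OF I, of "fst b" "fst c"] bc unfolding domE_def by auto
      thus ?thesis using bc by auto
    qed
  qed
  thus "RE2 K I e J f" using RE2_refl[OF I x] by auto
qed

end

context tka begin

lemma IK_ne: "I \<in> IK K \<Longrightarrow> I \<noteq> {}"
  unfolding IK_def by auto

lemma U3a:
  assumes I: "I \<in> IK K" and J: "J \<in> IK K" and HJ: "I \<inter> J \<noteq> {}"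
  shows "R2 K I x J y \<longleftrightarrow> (\<exists>w \<in> Uij K (I \<inter> J) I \<inter> Uij K (I \<inter> J) J.
                  phij K (I \<inter> J) I w = x \<and> phij K (I \<inter> J) J w = y)"
proof -
  define H where "H = I \<inter> J"
  define A where "A = I \<union> J"
  have H: "H \<in> IK K" using IK_sub[OF I, of H] HJ unfolding H_def by auto
  have UHA: "Uij K H I \<inter> Uij K H J = Uij K H A" using T1[OF H I J] unfolding H_def A_def by auto
  show ?thesis unfolding H_def[symmetric]
  proof
    assume r: "R2 K I x J y"
    have A: "A \<in> IK K" "x \<in> Uij K I A" "y \<in> Uij K J A" "phij K I A x = phij K J A y"
      using r unfolding R2_def A_def by auto
    define v where "v = phij K I A x"
    have vA: "v \<in> topspace (Ut K A)" using G1[OF I _ A(2)] unfolding v_def A_def by auto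
    have "sc K A v \<in> EE K I A" using T5[OF I _ A(2)] unfolding v_def A_def by auto
    moreover have "sc K A v \<in> EE K J A" using T5[OF J _ A(3)] A(4) unfolding v_def A_def by auto
    ultimately have "sc K A v \<in> EE K H A" using Fint[OF A(1), of I J] unfolding A_def H_def by auto
    then obtain w where w: "w \<in> Uij K H A" "phij K H A w = v" using T6[OF H _ A(1) vA] unfolding H_def A_def by auto
    have wI: "w \<in> Uij K H I" "w \<in> Uij K H J" using w UHA by auto
    have p1: "phij K H I w \<in> Uij K I A" using T4[OF H I _ _ w(1)] unfolding H_def A_def by auto
    have "phij K I A (phij K H I w) = v" using G3[OF H I A(1) _ _ wI(1) p1] w unfolding H_def A_def by auto
    hence e1: "phij K H I w = x" using G2[OF I A(1)] p1 A(2) unfolding v_def A_def by (auto simp: inj_on_def)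
    have p2: "phij K H J w \<in> Uij K J A" using T4[OF H J _ _ w(1)] unfolding H_def A_def by auto
    have "phij K J A (phij K H J w) = v" using G3[OF H J A(1) _ _ wI(2) p2] w unfolding H_def A_def by auto
    hence e2: "phij K H J w = y" using G2[OF J A(1)] p2 A(3) A(4) unfolding v_def A_def by (auto simp: inj_on_def)
    show "\<exists>w \<in> Uij K H I \<inter> Uij K H J. phij K H I w = x \<and> phij K H J w = y" using wI e1 e2 by auto
  next
    assume "\<exists>w \<in> Uij K H I \<inter> Uij K H J. phij K H I w = x \<and> phij K H J w = y"
    then obtain w where w: "w \<in> Uij K H A" "phij K H I w = x" "phij K H J w = y" using UHA by auto
    have A: "A \<in> IK K" using Uij_IK w(1) .
    have wI: "w \<in> Uij K H I" "w \<in> Uij K H J" using w UHA by auto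
    have p1: "x \<in> Uij K I A" using T4[OF H I _ _ w(1)] w unfolding H_def A_def by auto
    have q1: "phij K I A x = phij K H A w" using G3[OF H I A _ _ wI(1)] p1 w unfolding H_def A_def by auto
    have p2: "y \<in> Uij K J A" using T4[OF H J _ _ w(1)] w unfolding H_def A_def by auto
    have q2: "phij K J A y = phij K H A w" using G3[OF H J A _ _ wI(2)] p2 w unfolding H_def A_def by auto
    show "R2 K I x J y" unfolding R2_def A_def[symmetric] using A p1 p2 q1 q2 by auto
  qed
qed

lemma psi_eq:
  assumes I: "I \<in> IK K" and A: "A \<in> IK K" and s: "I \<subset> A" and x: "x \<in> Uij K I A" and z: "sc K I x = zr K I x"
  shows "psi K A (phij K I A x) = psi K I x"
proof -
  have xU: "x \<in> UU K I A" using x s A by (simp add: Uij_strict)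
  have xI: "x \<in> topspace (Ut K I)" using UU_sub[OF I A s] xU by auto
  have xz: "x \<in> chart_zeros K I" using xI z unfolding chart_zeros_def zeroset_def by auto
  have "x \<in> UU K I A \<inter> chart_zeros K I" using xU xz by auto
  hence fA: "psi K I x \<in> footprint K A" using ccD(2)[OF I A s] by auto
  have "psi K I x \<in> topspace X" using psi_img[OF I] xz by auto
  hence "psi K I x \<in> psi K A ` chart_zeros K A" using psi_img[OF A] fA by auto
  moreover have "phij K I A x = inv_into (chart_zeros K A) (psi K A) (psi K I x)"
    using ccD(8)[OF I A s] xU xz s by (auto simp: phij_def)
  ultimately show ?thesis by (simp add: f_inv_into_f)
qed

lemma zer_lemma:
  assumes I: "I \<in> IK K" and A: "A \<in> IK K" and s: "I \<subseteq> A" and xA: "x \<in> Uij K I A"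
    and v: "sc K A (phij K I A x) \<in> EE K {} A"
  shows "sc K I x = zr K I x"
proof -
  define v where "v = phij K I A x"
  have xI: "x \<in> topspace (Ut K I)" and vA: "v \<in> topspace (Ut K A)" using G1[OF I s xA] unfolding v_def by auto
  obtain u where u: "u \<in> topspace (Ut K A)" "sc K A v = zr K A u" using v Fzero[OF A] unfolding v_def by auto
  have "v = u" using pr_sc[OF A vA] pr_zr[OF A u(1)] u(2) by metis
  hence e: "sc K A v = zr K A v" using u by simp
  have g: "Phij K I A (zr K I x) = zr K A v" "Phij K I A (sc K I x) = sc K A v" using GE4[OF I s xA] unfolding v_def by auto
  have m: "zr K I x \<in> prpre K I (Uij K I A)" "sc K I x \<in> prpre K I (Uij K I A)"
    using pr_zr[OF I xI] pr_sc[OF I xI] zr_in[OF I xI] sc_in[OF I xI] xA by (auto simp: prpre_def)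
  show ?thesis using GE2[OF I A s] m g e by (auto simp: inj_on_def)
qed

lemma U3b:
  assumes I: "I \<in> IK K" and J: "J \<in> IK K" and HJ: "I \<inter> J = {}"
    and x: "x \<in> topspace (Ut K I)" and y: "y \<in> topspace (Ut K J)"
  shows "R2 K I x J y \<longleftrightarrow> (sc K I x = zr K I x \<and> sc K J y = zr K J y \<and> psi K I x = psi K J y)"
proof -
  define A where "A = I \<union> J"
  have sI: "I \<subset> A" using IK_ne[OF J] HJ unfolding A_def by auto
  have sJ: "J \<subset> A" using IK_ne[OF I] HJ unfolding A_def by auto
  show ?thesis
  proof
    assume r: "R2 K I x J y"
    have A: "A \<in> IK K" "x \<in> Uij K I A" "y \<in> Uij K J A" "phij K I A x = phij K J A y"
      using r unfolding R2_def A_def by auto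
    define v where "v = phij K I A x"
    have "sc K A v \<in> EE K I A" using T5[OF I _ A(2)] unfolding v_def A_def by auto
    moreover have "sc K A v \<in> EE K J A" using T5[OF J _ A(3)] A(4) unfolding v_def A_def by auto
    ultimately have ev: "sc K A v \<in> EE K {} A" using Fint[OF A(1), of I J] HJ unfolding A_def by auto
    have z1: "sc K I x = zr K I x" using zer_lemma[OF I A(1) _ A(2)] sI ev unfolding v_def by auto
    have z2: "sc K J y = zr K J y" using zer_lemma[OF J A(1) _ A(3)] sJ ev A(4) unfolding v_def by auto
    have "psi K A v = psi K I x" using psi_eq[OF I A(1) sI A(2) z1] unfolding v_def .
    moreover have "psi K A v = psi K J y" using psi_eq[OF J A(1) sJ A(3) z2] A(4) unfolding v_def by simp
    ultimately show "sc K I x = zr K I x \<and> sc K J y = zr K J y \<and> psi K I x = psi K J y" using z1 z2 by simp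
  next
    assume h: "sc K I x = zr K I x \<and> sc K J y = zr K J y \<and> psi K I x = psi K J y"
    have xz: "x \<in> chart_zeros K I" and yz: "y \<in> chart_zeros K J"
      using h x y unfolding chart_zeros_def zeroset_def by auto
    have p1: "psi K I x \<in> topspace X \<inter> footprint K I" using psi_img[OF I] xz by auto
    have p2: "psi K J y \<in> topspace X \<inter> footprint K J" using psi_img[OF J] yz by auto
    have fA: "psi K I x \<in> footprint K A" using p1 p2 h footprint_Un unfolding A_def by auto
    have A: "A \<in> IK K" using I J fA unfolding IK_def A_def by auto
    have "x \<in> {x \<in> chart_zeros K I. psi K I x \<in> footprint K I \<inter> footprint K A}" using xz p1 fA by auto
    hence "x \<in> UU K I A \<inter> chart_zeros K I" by (subst ccD(2)[OF I A sI])
    hence xA: "x \<in> UU K I A" by auto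
    have "y \<in> {x \<in> chart_zeros K J. psi K J x \<in> footprint K J \<inter> footprint K A}" using yz p2 fA h by auto
    hence "y \<in> UU K J A \<inter> chart_zeros K J" by (subst ccD(2)[OF J A sJ])
    hence yA: "y \<in> UU K J A" by auto
    have q1: "phij K I A x = inv_into (chart_zeros K A) (psi K A) (psi K I x)"
      using ccD(8)[OF I A sI] xA xz sI by (auto simp: phij_def)
    have q2: "phij K J A y = inv_into (chart_zeros K A) (psi K A) (psi K J y)"
      using ccD(8)[OF J A sJ] yA yz sJ by (auto simp: phij_def)
    show "R2 K I x J y" unfolding R2_def A_def[symmetric] using A xA yA q1 q2 h sI sJ by (auto simp: Uij_strict)
  qed
qed

end

context tka begin

lemma E3a:
  assumes I: "I \<in> IK K" and J: "J \<in> IK K" and HJ: "I \<inter> J \<noteq> {}"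
  shows "RE2 K I e J f \<longleftrightarrow> (\<exists>w \<in> prpre K (I \<inter> J) (Uij K (I \<inter> J) I) \<inter> prpre K (I \<inter> J) (Uij K (I \<inter> J) J).
                  Phij K (I \<inter> J) I w = e \<and> Phij K (I \<inter> J) J w = f)"
proof -
  define H where "H = I \<inter> J"
  define A where "A = I \<union> J"
  have H: "H \<in> IK K" using IK_sub[OF I, of H] HJ unfolding H_def by auto
  have UHA: "Uij K H I \<inter> Uij K H J = Uij K H A" using T1[OF H I J] unfolding H_def A_def by auto
  show ?thesis unfolding H_def[symmetric]
  proof
    assume r: "RE2 K I e J f"
    have A: "A \<in> IK K" "e \<in> prpre K I (Uij K I A)" "f \<in> prpre K J (Uij K J A)" "Phij K I A e = Phij K J A f"
      using r unfolding RE2_def A_def by auto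
    define g where "g = Phij K I A e"
    have "g \<in> EE K I A" using F1[OF I _ A(2)] unfolding g_def A_def by auto
    moreover have "g \<in> EE K J A" using F1[OF J _ A(3)] A(4) unfolding g_def A_def by auto
    ultimately have gH: "g \<in> EE K H A" using Fint[OF A(1), of I J] unfolding A_def H_def by auto
    have R: "R2 K I (pr K I e) J (pr K J f)" using RE2_R2[OF I J r] .
    then obtain w0 where w0: "w0 \<in> Uij K H I" "w0 \<in> Uij K H J" "phij K H I w0 = pr K I e"
      using U3a[OF I J HJ] unfolding H_def by auto
    have w0A: "w0 \<in> Uij K H A" using w0 UHA by auto
    have xA: "pr K I e \<in> Uij K I A" using A(2) by (auto simp: prpre_def)
    have c1: "phij K I A (pr K I e) = phij K H A w0" using G3[OF H I A(1) _ _ w0(1)] w0(3) xA unfolding H_def A_def by auto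
    have gE: "g \<in> topspace (Et K A)" "pr K A g = phij K I A (pr K I e)" using GE1[OF I _ A(2)] unfolding g_def A_def by auto
    obtain w where w: "w \<in> prpre K H (Uij K H A)" "Phij K H A w = g"
      using F2[OF H _ gH gE(1) w0A] gE(2) c1 unfolding H_def A_def by auto
    have pw: "pr K H w \<in> Uij K H I" "pr K H w \<in> Uij K H J" using w(1) UHA by (auto simp: prpre_def)
    have wI: "w \<in> prpre K H (Uij K H I)" "w \<in> prpre K H (Uij K H J)" using w(1) pw by (auto simp: prpre_def)
    have p1: "Phij K H I w \<in> prpre K I (Uij K I A)"
      using GE1[OF H _ wI(1)] T4[OF H I _ _, of A "pr K H w"] w(1) unfolding H_def A_def by (auto simp: prpre_def)
    have "Phij K I A (Phij K H I w) = g" using GE3[OF H I A(1) _ _ wI(1) p1] w unfolding H_def A_def by auto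
    hence e1: "Phij K H I w = e" using GE2[OF I A(1)] p1 A(2) unfolding g_def A_def by (auto simp: inj_on_def)
    have p2: "Phij K H J w \<in> prpre K J (Uij K J A)"
      using GE1[OF H _ wI(2)] T4[OF H J _ _, of A "pr K H w"] w(1) unfolding H_def A_def by (auto simp: prpre_def)
    have "Phij K J A (Phij K H J w) = g" using GE3[OF H J A(1) _ _ wI(2) p2] w unfolding H_def A_def by auto
    hence e2: "Phij K H J w = f" using GE2[OF J A(1)] p2 A(3) A(4) unfolding g_def A_def by (auto simp: inj_on_def)
    show "\<exists>w \<in> prpre K H (Uij K H I) \<inter> prpre K H (Uij K H J). Phij K H I w = e \<and> Phij K H J w = f"
      using wI e1 e2 by auto
  next
    assume "\<exists>w \<in> prpre K H (Uij K H I) \<inter> prpre K H (Uij K H J). Phij K H I w = e \<and> Phij K H J w = f"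
    then obtain w where wI: "w \<in> prpre K H (Uij K H I)" "w \<in> prpre K H (Uij K H J)"
        and w: "Phij K H I w = e" "Phij K H J w = f" by auto
    have pwA: "pr K H w \<in> Uij K H A" using wI UHA by (auto simp: prpre_def)
    have A: "A \<in> IK K" using Uij_IK pwA .
    have p1: "e \<in> prpre K I (Uij K I A)"
      using GE1[OF H _ wI(1)] T4[OF H I _ _ pwA] w unfolding H_def A_def by (auto simp: prpre_def)
    have q1: "Phij K I A e = Phij K H A w" using GE3[OF H I A _ _ wI(1)] p1 w unfolding H_def A_def by auto
    have p2: "f \<in> prpre K J (Uij K J A)"
      using GE1[OF H _ wI(2)] T4[OF H J _ _ pwA] w unfolding H_def A_def by (auto simp: prpre_def)
    have q2: "Phij K J A f = Phij K H A w" using GE3[OF H J A _ _ wI(2)] p2 w unfolding H_def A_def by auto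
    show "RE2 K I e J f" unfolding RE2_def A_def[symmetric] using A p1 p2 q1 q2 by auto
  qed
qed

lemma E3b:
  assumes I: "I \<in> IK K" and J: "J \<in> IK K" and HJ: "I \<inter> J = {}"
    and e: "e \<in> topspace (Et K I)" and f: "f \<in> topspace (Et K J)"
  shows "RE2 K I e J f \<longleftrightarrow> (\<exists>x\<in>topspace (Ut K I). \<exists>y\<in>topspace (Ut K J).
                  e = sc K I x \<and> sc K I x = zr K I x \<and> f = sc K J y \<and> sc K J y = zr K J y \<and>
                  psi K I x = psi K J y)"
proof -
  define A where "A = I \<union> J"
  have sI: "I \<subseteq> A" and sJ: "J \<subseteq> A" unfolding A_def by auto
  show ?thesis
  proof
    assume r: "RE2 K I e J f"
    have A: "A \<in> IK K" "e \<in> prpre K I (Uij K I A)" "f \<in> prpre K J (Uij K J A)" "Phij K I A e = Phij K J A f"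
      using r unfolding RE2_def A_def by auto
    define x where "x = pr K I e"
    define y where "y = pr K J f"
    have xy: "x \<in> topspace (Ut K I)" "y \<in> topspace (Ut K J)" using pr_in I J e f unfolding x_def y_def by auto
    have R: "R2 K I x J y" using RE2_R2[OF I J r] unfolding x_def y_def .
    hence z: "sc K I x = zr K I x \<and> sc K J y = zr K J y \<and> psi K I x = psi K J y" using U3b[OF I J HJ xy] by simp
    define g where "g = Phij K I A e"
    have "g \<in> EE K I A" using F1[OF I sI A(2)] unfolding g_def by auto
    moreover have "g \<in> EE K J A" using F1[OF J sJ A(3)] A(4) unfolding g_def by auto
    ultimately have "g \<in> EE K {} A" using Fint[OF A(1) sI sJ] HJ by auto
    then obtain u where u: "u \<in> topspace (Ut K A)" "g = zr K A u" using Fzero[OF A(1)] by auto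
    have gp: "pr K A g = phij K I A x" "pr K A (Phij K J A f) = phij K J A y"
      using GE1[OF I sI A(2)] GE1[OF J sJ A(3)] unfolding g_def x_def y_def by auto
    have "u = phij K I A x" using pr_zr[OF A(1) u(1)] u(2) gp by simp
    hence g1: "g = zr K A (phij K I A x)" using u by simp
    have g2: "g = zr K A (phij K J A y)" using pr_zr[OF A(1) u(1)] u(2) gp A(4) unfolding g_def by simp
    have xA: "x \<in> Uij K I A" and yA: "y \<in> Uij K J A" using A unfolding x_def y_def by (auto simp: prpre_def)
    have m1: "zr K I x \<in> prpre K I (Uij K I A)" using pr_zr[OF I xy(1)] zr_in[OF I xy(1)] xA by (auto simp: prpre_def)
    have m2: "zr K J y \<in> prpre K J (Uij K J A)" using pr_zr[OF J xy(2)] zr_in[OF J xy(2)] yA by (auto simp: prpre_def)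
    have "Phij K I A (zr K I x) = g" using GE4[OF I sI xA] g1 by simp
    hence ex: "e = zr K I x" using GE2[OF I A(1) sI] m1 A(2) unfolding g_def by (auto simp: inj_on_def)
    have "Phij K J A (zr K J y) = Phij K J A f" using GE4[OF J sJ yA] g2 A(4) unfolding g_def by simp
    hence fy: "f = zr K J y" using GE2[OF J A(1) sJ] m2 A(3) by (auto simp: inj_on_def)
    show "\<exists>x\<in>topspace (Ut K I). \<exists>y\<in>topspace (Ut K J).
                  e = sc K I x \<and> sc K I x = zr K I x \<and> f = sc K J y \<and> sc K J y = zr K J y \<and>
                  psi K I x = psi K J y"
    proof -
      have "e = sc K I x \<and> sc K I x = zr K I x \<and> f = sc K J y \<and> sc K J y = zr K J y \<and> psi K I x = psi K J y"
        using z ex fy by simp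
      thus ?thesis using xy by blast
    qed
  next
    assume "\<exists>x\<in>topspace (Ut K I). \<exists>y\<in>topspace (Ut K J).
                  e = sc K I x \<and> sc K I x = zr K I x \<and> f = sc K J y \<and> sc K J y = zr K J y \<and>
                  psi K I x = psi K J y"
    then obtain x y where xy: "x \<in> topspace (Ut K I)" "y \<in> topspace (Ut K J)"
      and h: "e = zr K I x" "sc K I x = zr K I x" "f = zr K J y" "sc K J y = zr K J y" "psi K I x = psi K J y" by auto
    have R: "R2 K I x J y" using U3b[OF I J HJ xy] h by simp
    have A: "A \<in> IK K" "x \<in> Uij K I A" "y \<in> Uij K J A" "phij K I A x = phij K J A y"
      using R unfolding R2_def A_def by auto
    have p1: "e \<in> prpre K I (Uij K I A)" using pr_zr[OF I xy(1)] zr_in[OF I xy(1)] A(2) h by (auto simp: prpre_def)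
    have p2: "f \<in> prpre K J (Uij K J A)" using pr_zr[OF J xy(2)] zr_in[OF J xy(2)] A(3) h by (auto simp: prpre_def)
    have "Phij K I A e = Phij K J A f" using GE4[OF I sI A(2)] GE4[OF J sJ A(3)] A(4) h by simp
    thus "RE2 K I e J f" unfolding RE2_def A_def[symmetric] using A p1 p2 by auto
  qed
qed

end

theorem mainTheorem6:
  fixes X :: "'x topology" and K :: "('x, 'u, 'e) katlas"
  assumes "compact_space X" and "metrizable_space X"
    and "is_top_katlas X K" and "is_filtered K" and "is_tame K"
  shows
   "(\<forall>I\<in>IK K. \<forall>J\<in>IK K. \<forall>x\<in>topspace (Ut K I). \<forall>y\<in>topspace (Ut K J).
      (((I, x), (J, y)) \<in> relU K
        \<longleftrightarrow> (I \<union> J \<in> IK K \<and> x \<in> Uij K I (I \<union> J) \<and> y \<in> Uij K J (I \<union> J) \<and>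
             phij K I (I \<union> J) x = phij K J (I \<union> J) y))
    \<and> (((I, x), (J, y)) \<in> relU K
        \<longleftrightarrow> ((I \<inter> J \<noteq> {} \<and>
               (\<exists>w \<in> Uij K (I \<inter> J) I \<inter> Uij K (I \<inter> J) J.
                  phij K (I \<inter> J) I w = x \<and> phij K (I \<inter> J) J w = y))
            \<or> (I \<inter> J = {} \<and> sc K I x = zr K I x \<and> sc K J y = zr K J y \<and>
               psi K I x = psi K J y))))
  \<and> (\<forall>I\<in>IK K. \<forall>J\<in>IK K. \<forall>e\<in>topspace (Et K I). \<forall>f\<in>topspace (Et K J).
      (((I, e), (J, f)) \<in> relE K
        \<longleftrightarrow> (I \<union> J \<in> IK K \<and> e \<in> prpre K I (Uij K I (I \<union> J)) \<and>
             f \<in> prpre K J (Uij K J (I \<union> J)) \<and>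
             Phij K I (I \<union> J) e = Phij K J (I \<union> J) f))
    \<and> (((I, e), (J, f)) \<in> relE K
        \<longleftrightarrow> ((I \<inter> J \<noteq> {} \<and>
               (\<exists>w \<in> prpre K (I \<inter> J) (Uij K (I \<inter> J) I) \<inter> prpre K (I \<inter> J) (Uij K (I \<inter> J) J).
                  Phij K (I \<inter> J) I w = e \<and> Phij K (I \<inter> J) J w = f))
            \<or> (I \<inter> J = {} \<and>
               (\<exists>x\<in>topspace (Ut K I). \<exists>y\<in>topspace (Ut K J).
                  e = sc K I x \<and> sc K I x = zr K I x \<and> f = sc K J y \<and> sc K J y = zr K J y \<and>
                  psi K I x = psi K J y)))))
  \<and> (\<forall>I\<in>IK K. inj_on (\<lambda>x. piK K (I, x)) (topspace (Ut K I))
              \<and> inj_on (\<lambda>e. piE K (I, e)) (topspace (Et K I)))"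
proof -
  interpret tka X K by (rule tka.intro[OF assms(3,4,5)])
  have P1: "\<forall>I\<in>IK K. \<forall>J\<in>IK K. \<forall>x\<in>topspace (Ut K I). \<forall>y\<in>topspace (Ut K J).
      (((I, x), (J, y)) \<in> relU K
        \<longleftrightarrow> (I \<union> J \<in> IK K \<and> x \<in> Uij K I (I \<union> J) \<and> y \<in> Uij K J (I \<union> J) \<and>
             phij K I (I \<union> J) x = phij K J (I \<union> J) y))
    \<and> (((I, x), (J, y)) \<in> relU K
        \<longleftrightarrow> ((I \<inter> J \<noteq> {} \<and>
               (\<exists>w \<in> Uij K (I \<inter> J) I \<inter> Uij K (I \<inter> J) J.
                  phij K (I \<inter> J) I w = x \<and> phij K (I \<inter> J) J w = y))
            \<or> (I \<inter> J = {} \<and> sc K I x = zr K I x \<and> sc K J y = zr K J y \<and>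
               psi K I x = psi K J y)))"
  proof (intro ballI conjI)
    fix I J x y assume I: "I \<in> IK K" and J: "J \<in> IK K" and x: "x \<in> topspace (Ut K I)" and y: "y \<in> topspace (Ut K J)"
    show "((I, x), (J, y)) \<in> relU K \<longleftrightarrow> (I \<union> J \<in> IK K \<and> x \<in> Uij K I (I \<union> J) \<and> y \<in> Uij K J (I \<union> J) \<and>
             phij K I (I \<union> J) x = phij K J (I \<union> J) y)"
      using relU_iff[OF I J x y] unfolding R2_def .
    show "((I, x), (J, y)) \<in> relU K
        \<longleftrightarrow> ((I \<inter> J \<noteq> {} \<and>
               (\<exists>w \<in> Uij K (I \<inter> J) I \<inter> Uij K (I \<inter> J) J.
                  phij K (I \<inter> J) I w = x \<and> phij K (I \<inter> J) J w = y))
            \<or> (I \<inter> J = {} \<and> sc K I x = zr K I x \<and> sc K J y = zr K J y \<and>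
               psi K I x = psi K J y))"
      using relU_iff[OF I J x y] U3a[OF I J, of x y] U3b[OF I J _ x y] by blast
  qed
  have P2: "\<forall>I\<in>IK K. \<forall>J\<in>IK K. \<forall>e\<in>topspace (Et K I). \<forall>f\<in>topspace (Et K J).
      (((I, e), (J, f)) \<in> relE K
        \<longleftrightarrow> (I \<union> J \<in> IK K \<and> e \<in> prpre K I (Uij K I (I \<union> J)) \<and>
             f \<in> prpre K J (Uij K J (I \<union> J)) \<and>
             Phij K I (I \<union> J) e = Phij K J (I \<union> J) f))
    \<and> (((I, e), (J, f)) \<in> relE K
        \<longleftrightarrow> ((I \<inter> J \<noteq> {} \<and>
               (\<exists>w \<in> prpre K (I \<inter> J) (Uij K (I \<inter> J) I) \<inter> prpre K (I \<inter> J) (Uij K (I \<inter> J) J).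
                  Phij K (I \<inter> J) I w = e \<and> Phij K (I \<inter> J) J w = f))
            \<or> (I \<inter> J = {} \<and>
               (\<exists>x\<in>topspace (Ut K I). \<exists>y\<in>topspace (Ut K J).
                  e = sc K I x \<and> sc K I x = zr K I x \<and> f = sc K J y \<and> sc K J y = zr K J y \<and>
                  psi K I x = psi K J y))))"
  proof (intro ballI conjI)
    fix I J e f assume I: "I \<in> IK K" and J: "J \<in> IK K" and e: "e \<in> topspace (Et K I)" and f: "f \<in> topspace (Et K J)"
    show "((I, e), (J, f)) \<in> relE K
        \<longleftrightarrow> (I \<union> J \<in> IK K \<and> e \<in> prpre K I (Uij K I (I \<union> J)) \<and>
             f \<in> prpre K J (Uij K J (I \<union> J)) \<and>
             Phij K I (I \<union> J) e = Phij K J (I \<union> J) f)"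
      using relE_iff[OF I J e f] unfolding RE2_def .
    show "((I, e), (J, f)) \<in> relE K
        \<longleftrightarrow> ((I \<inter> J \<noteq> {} \<and>
               (\<exists>w \<in> prpre K (I \<inter> J) (Uij K (I \<inter> J) I) \<inter> prpre K (I \<inter> J) (Uij K (I \<inter> J) J).
                  Phij K (I \<inter> J) I w = e \<and> Phij K (I \<inter> J) J w = f))
            \<or> (I \<inter> J = {} \<and>
               (\<exists>x\<in>topspace (Ut K I). \<exists>y\<in>topspace (Ut K J).
                  e = sc K I x \<and> sc K I x = zr K I x \<and> f = sc K J y \<and> sc K J y = zr K J y \<and>
                  psi K I x = psi K J y)))"
      using relE_iff[OF I J e f] E3a[OF I J, of e f] E3b[OF I J _ e f] by blast
  qed
  have P3: "\<forall>I\<in>IK K. inj_on (\<lambda>x. piK K (I, x)) (topspace (Ut K I))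
              \<and> inj_on (\<lambda>e. piE K (I, e)) (topspace (Et K I))"
  proof (intro ballI conjI inj_onI)
    fix I x x' assume I: "I \<in> IK K" and x: "x \<in> topspace (Ut K I)" and x': "x' \<in> topspace (Ut K I)"
      and eq: "piK K (I, x) = piK K (I, x')"
    have "((I, x'), (I, x')) \<in> relU K" unfolding relU_def domU_def using I x' by auto
    hence "(I, x') \<in> piK K (I, x)" using eq unfolding piK_def by auto
    hence "((I, x), (I, x')) \<in> relU K" unfolding piK_def by auto
    hence "R2 K I x I x'" using relU_iff[OF I I x x'] by simp
    thus "x = x'" unfolding R2_def by (simp add: phij_def)
  next
    fix I x x' assume I: "I \<in> IK K" and x: "x \<in> topspace (Et K I)" and x': "x' \<in> topspace (Et K I)"
      and eq: "piE K (I, x) = piE K (I, x')"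
    have "((I, x'), (I, x')) \<in> relE K" unfolding relE_def domE_def using I x' by auto
    hence "(I, x') \<in> piE K (I, x)" using eq unfolding piE_def by auto
    hence "((I, x), (I, x')) \<in> relE K" unfolding piE_def by auto
    hence "RE2 K I x I x'" using relE_iff[OF I I x x'] by simp
    thus "x = x'" unfolding RE2_def by (simp add: Phij_def)
  qed
  show ?thesis using P1 P2 P3 by blast
qed

end
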